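(* For the tree $\widetilde T$ constructed below there is a constant $C>0$ such that $|\widetilde T_n|\le 3^{C\sqrt n}$ for all $n\ge1$.
   Context: For a rooted tree, $T_n$ denotes the set of edges $e=(e^-,e^+)$ with $e^+$ at distance $n$ from the root. To a nonempty set $E\subset\{0,1,2\}^{\mathbb N}$ associate the rooted tree $\Phi(E)$ whose vertices are all finite words (including the empty word, the root) that are prefixes of some element of $E$, with edges between each such word $w$ and each such word $wj$, $j\in\{0,1,2\}$. The shift is $\mathcal S(a_1,a_2,\dots)=(a_2,a_3,\dots)$. The labelled $1$-$3$ tree $T_{1,3}$: vertices are finite words over $\{0,1,2\}$; the root $\emptyset$ has children $0,1$; a vertex $w$ with $k$ children has children $w0,\dots,w(k-1)$; for each $n\ge1$, ordering the $2^n$ level-$n$ vertices lexicographically, the first $2^{n-1}$ have one child and the last $2^{n-1}$ have three children. Let $R$ be the set of sequences all of whose prefixes are vertices of $T_{1,3}$, $E_0$ the set of sequences $(a_1,a_2,0,a_3,0,0,a_4,0,0,0,a_5,\dots)$ (each $a_k$ followed by $k-1$ zeros) for $(a_k)\in R$, $E_j=\mathcal S(E_{j-1})$, $\widetilde E=\bigcup_{j\ge0}E_j$, and $\widetilde T=\Phi(\widetilde E)$. *)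

theory Defs
  imports Complex_Main
begin

(* Finite words over {0,1,2} are nat lists; infinite sequences are nat => nat,
   indexed from 0 (so a_1 is s 0). *)

definition lex_less :: "nat list \<Rightarrow> nat list \<Rightarrow> bool" where
  "lex_less v w \<longleftrightarrow> (v, w) \<in> lexord {(a, b). a < b}"

definition nchildren13 :: "nat \<Rightarrow> nat list set \<Rightarrow> nat list \<Rightarrow> nat" where
  "nchildren13 n V w = (if card {v \<in> V. lex_less v w} < 2 ^ (n - 1) then 1 else 3)"

fun T13_level :: "nat \<Rightarrow> nat list set" where
  "T13_level 0 = {[]}"
| "T13_level (Suc n) =
     (if n = 0 then {[0], [1]}
      else {w @ [j] | w j. w \<in> T13_level n \<and> j < nchildren13 n (T13_level n) w})"

definition T13_vertices :: "nat list set" where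
  "T13_vertices = (\<Union>n. T13_level n)"

definition prefix_seq :: "(nat \<Rightarrow> nat) \<Rightarrow> nat \<Rightarrow> nat list" where
  "prefix_seq s n = map s [0..<n]"

definition R13 :: "(nat \<Rightarrow> nat) set" where
  "R13 = {s. \<forall>n. prefix_seq s n \<in> T13_vertices}"

(* E_0: a_k (1-indexed) followed by k-1 zeros; with 0-indexing, a k sits at position k(k+1)/2 *)
definition E0 :: "(nat \<Rightarrow> nat) set" where
  "E0 = {t. \<exists>a \<in> R13. (\<forall>k. t (k * (k + 1) div 2) = a k) \<and>
                        (\<forall>p. (\<nexists>k. p = k * (k + 1) div 2) \<longrightarrow> t p = 0)}"

definition shift :: "(nat \<Rightarrow> nat) \<Rightarrow> (nat \<Rightarrow> nat)" where
  "shift s = (\<lambda>n. s (Suc n))"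

definition Ej :: "nat \<Rightarrow> (nat \<Rightarrow> nat) set" where
  "Ej j = (shift ^^ j) ` E0"

definition Etilde :: "(nat \<Rightarrow> nat) set" where
  "Etilde = (\<Union>j. Ej j)"

definition Phi_vertices :: "(nat \<Rightarrow> nat) set \<Rightarrow> nat list set" where
  "Phi_vertices E = {prefix_seq s n | s n. s \<in> E}"

definition Phi_edges :: "(nat \<Rightarrow> nat) set \<Rightarrow> (nat list \<times> nat list) set" where
  "Phi_edges E = {(w, w @ [j]) | w j. w \<in> Phi_vertices E \<and> w @ [j] \<in> Phi_vertices E \<and> j \<in> {0,1,2}}"

(* T_n for Phi(E): edges e = (e-, e+) with e+ at distance n from the root [];
   in Phi(E) the distance of a word from the root is its length *)
definition Phi_level_edges :: "(nat \<Rightarrow> nat) set \<Rightarrow> nat \<Rightarrow> (nat list \<times> nat list) set" where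
  "Phi_level_edges E n = {e \<in> Phi_edges E. length (snd e) = n}"

end

theory Submission
  imports Defs "HOL-Library.FuncSet"
begin

definition tri :: "nat \<Rightarrow> nat" where "tri k = k * (k + 1) div 2"

lemma tri2: "2 * tri k = k * (k + 1)"
  unfolding tri_def by (induction k) auto

lemma tri_mono: "k \<le> k' \<Longrightarrow> tri k \<le> tri k'"
proof -
  assume "k \<le> k'"
  then have "k * (k+1) \<le> k' * (k'+1)" by (intro mult_mono) auto
  then show ?thesis using tri2[of k] tri2[of k'] by linarith
qed

lemma tri_ge: "k \<le> tri k"
  using tri2[of k] by (cases k) auto

lemma tri_diff_sq:
  assumes "k0 \<le> k" shows "(k - k0) * (k - k0) \<le> 2 * (tri k - tri k0)"
proof -
  obtain d where k: "k = k0 + d" using assms le_Suc_ex by blast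
  have "2 * tri k = 2 * tri k0 + d * d + d * (2 * k0 + 1)"
    using tri2[of k] tri2[of k0] unfolding k by (simp add: algebra_simps)
  then show ?thesis using k by simp
qed

lemma tri_gap:
  assumes "k < k'" shows "tri k + k + 1 \<le> tri k'"
proof -
  have "2 * tri (Suc k) = 2 * tri k + 2 * (k + 1)" using tri2[of k] tri2[of "Suc k"] by simp
  then have "tri (Suc k) = tri k + k + 1" by simp
  moreover have "tri (Suc k) \<le> tri k'" using assms by (intro tri_mono) auto
  ultimately show ?thesis by simp
qed

lemma tri_inj: "tri k = tri k' \<Longrightarrow> k = k'"
  using tri_gap[of k k'] tri_gap[of k' k] by (cases "k < k'"; cases "k' < k") auto

definition tinv :: "nat \<Rightarrow> nat" where "tinv p = (SOME k. tri k = p)"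

lemma tinv_tri[simp]: "tinv (tri k) = k"
  unfolding tinv_def by (rule some_equality) (auto dest: tri_inj)

lemma T13_lt3: "w \<in> T13_level m \<Longrightarrow> x \<in> set w \<Longrightarrow> x < 3"
proof (induction m arbitrary: w)
  case 0 then show ?case by simp
next
  case (Suc m)
  show ?case
  proof (cases "m = 0")
    case True then show ?thesis using Suc.prems by auto
  next
    case False
    then obtain v j where w: "w = v @ [j]" "v \<in> T13_level m" "j < nchildren13 m (T13_level m) v"
      using Suc.prems(1) by auto
    have "j < 3" using w(3) unfolding nchildren13_def by (auto split: if_splits)
    then show ?thesis using Suc.IH[OF w(2)] Suc.prems(2) w(1) by auto
  qed
qed

lemma R13_lt3: "a \<in> R13 \<Longrightarrow> a k < 3"
proof -
  assume "a \<in> R13"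
  then have "prefix_seq a (Suc k) \<in> T13_vertices" unfolding R13_def by auto
  then obtain m where "prefix_seq a (Suc k) \<in> T13_level m" unfolding T13_vertices_def by auto
  moreover have "a k \<in> set (prefix_seq a (Suc k))" unfolding prefix_seq_def by auto
  ultimately show ?thesis using T13_lt3 by blast
qed

lemma E0_val: "t \<in> E0 \<Longrightarrow> \<exists>a. (\<forall>k. a k < 3) \<and> (\<forall>p. t p = (if p \<in> range tri then a (tinv p) else 0))"
proof -
  assume "t \<in> E0"
  then obtain a where a: "a \<in> R13" "\<forall>k. t (tri k) = a k" "\<forall>p. (\<nexists>k. p = tri k) \<longrightarrow> t p = 0"
    unfolding E0_def tri_def by blast
  show ?thesis
    by (rule exI[of _ a]) (use a R13_lt3 in \<open>auto simp: image_iff\<close>)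
qed

lemma shift_pow: "(shift ^^ j) t = (\<lambda>p. t (p + j))"
  by (induction j arbitrary: t) (auto simp: shift_def)

definition K :: "nat \<Rightarrow> nat \<Rightarrow> nat set" where
  "K n j = {k. j \<le> tri k \<and> tri k < j + n}"

definition wd :: "nat \<Rightarrow> nat \<Rightarrow> (nat \<Rightarrow> nat) \<Rightarrow> nat list" where
  "wd n j g = map (\<lambda>i. if i + j \<in> range tri then g (tinv (i + j)) else 0) [0..<n]"

definition Z :: "nat \<Rightarrow> nat list set" where
  "Z n = insert (replicate n 0) ((\<lambda>(i,v). (replicate n 0)[i:=v]) ` ({..<n} \<times> {..<3}))"

lemma word_small:
  assumes "\<forall>k. a k < 3"
  shows "wd n j a \<in> wd n j ` PiE (K n j) (\<lambda>_. {..<3::nat})"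
proof
  show "restrict a (K n j) \<in> PiE (K n j) (\<lambda>_. {..<3::nat})" using assms by auto
  show "wd n j a = wd n j (restrict a (K n j))"
    unfolding wd_def by (auto simp: K_def image_iff)
qed

lemma word_large:
  assumes "\<forall>k. a k < 3" "tri n \<le> j"
  shows "wd n j a \<in> Z n"
proof (cases "\<exists>i<n. i + j \<in> range tri")
  case False
  then have "wd n j a = replicate n 0" unfolding wd_def
    by (intro nth_equalityI) auto
  then show ?thesis unfolding Z_def by simp
next
  case True
  then obtain i0 k0 where i0: "i0 < n" "i0 + j = tri k0" by auto
  have other: "i + j \<notin> range tri" if "i < n" "i \<noteq> i0" for i
  proof
    assume "i + j \<in> range tri"
    then obtain k where k: "i + j = tri k" by auto
    have "n \<le> k0" using tri_gap[of k0 n] i0 assms(2) by (cases "k0 < n") auto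
    have "n \<le> k" using tri_gap[of k n] k assms(2) by (cases "k < n") auto
    have "k \<noteq> k0" using k i0 that by auto
    then show False
    proof (cases "k < k0")
      case True
      then show ?thesis using tri_gap[OF True] k i0 that \<open>n \<le> k\<close> by linarith
    next
      case False
      have kk: "k0 < k" using False \<open>k \<noteq> k0\<close> by simp
      show ?thesis using tri_gap[OF kk] k i0 that \<open>n \<le> k0\<close> by linarith
    qed
  qed
  have "wd n j a = (replicate n 0)[i0 := a k0]" unfolding wd_def
  proof (intro nth_equalityI)
    fix i assume "i < length (map (\<lambda>i. if i + j \<in> range tri then a (tinv (i + j)) else 0) [0..<n])"
    then have i: "i < n" by simp
    show "map (\<lambda>i. if i + j \<in> range tri then a (tinv (i + j)) else 0) [0..<n] ! i = (replicate n 0)[i0 := a k0] ! i"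
    proof (cases "i = i0")
      case True then show ?thesis using i i0 by auto
    next
      case False then show ?thesis using i other[OF i False] by (auto simp: nth_list_update)
    qed
  qed simp
  then show ?thesis unfolding Z_def using i0(1) assms(1) by auto
qed

lemma W_sub:
  "{prefix_seq s n | s. s \<in> Etilde} \<subseteq>
     (\<Union>j<tri n. wd n j ` PiE (K n j) (\<lambda>_. {..<3::nat})) \<union> Z n"
proof
  fix w assume "w \<in> {prefix_seq s n | s. s \<in> Etilde}"
  then obtain j t where t: "t \<in> E0" "w = prefix_seq ((shift ^^ j) t) n"
    unfolding Etilde_def Ej_def by auto
  obtain a where a: "\<forall>k. a k < 3" "\<forall>p. t p = (if p \<in> range tri then a (tinv p) else 0)"
    using E0_val[OF t(1)] by blast
  have w: "w = wd n j a" unfolding t(2) wd_def prefix_seq_def shift_pow using a(2) by simp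
  show "w \<in> (\<Union>j<tri n. wd n j ` PiE (K n j) (\<lambda>_. {..<3::nat})) \<union> Z n"
  proof (cases "j < tri n")
    case True then show ?thesis using word_small[OF a(1), of n j] w by blast
  next
    case False then show ?thesis using word_large[OF a(1), of n j] w by auto
  qed
qed

lemma finite_K: "finite (K n j)"
proof (rule finite_subset)
  show "K n j \<subseteq> {..<j+n}" unfolding K_def using tri_ge le_less_trans by auto
qed simp

lemma card_K: "card (K n j) \<le> nat \<lceil>sqrt (2 * real n)\<rceil>"
proof (cases "K n j = {}")
  case True then show ?thesis by simp
next
  case False
  define m where "m = nat \<lceil>sqrt (2 * real n)\<rceil>"
  define k0 where "k0 = Min (K n j)"
  have k0: "k0 \<in> K n j" unfolding k0_def using False finite_K by simp
  have "K n j \<subseteq> {k0..<k0+m}"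
  proof
    fix k assume k: "k \<in> K n j"
    have "k0 \<le> k" unfolding k0_def using finite_K k by simp
    have "(k - k0) * (k - k0) \<le> 2 * (tri k - tri k0)" by (rule tri_diff_sq[OF \<open>k0 \<le> k\<close>])
    also have "\<dots> < 2 * n" using k k0 unfolding K_def by auto
    finally have "real ((k - k0) * (k - k0)) < 2 * real n" by linarith
    then have "real (k - k0) ^ 2 < 2 * real n" by (simp add: power2_eq_square)
    then have "real (k - k0) < sqrt (2 * real n)" using real_less_rsqrt by blast
    also have "\<dots> \<le> real m" unfolding m_def by linarith
    finally have "k - k0 < m" by simp
    then show "k \<in> {k0..<k0+m}" using \<open>k0 \<le> k\<close> by auto
  qed
  then have "card (K n j) \<le> card {k0..<k0+m}" by (intro card_mono) auto
  then show ?thesis unfolding m_def by simp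
qed

lemma card_Wj: "card (wd n j ` PiE (K n j) (\<lambda>_. {..<3::nat})) \<le> 3 ^ nat \<lceil>sqrt (2 * real n)\<rceil>"
proof -
  have "card (wd n j ` PiE (K n j) (\<lambda>_. {..<3::nat})) \<le> card (PiE (K n j) (\<lambda>_. {..<3::nat}))"
    by (rule card_image_le) (simp add: finite_PiE finite_K)
  also have "\<dots> = 3 ^ card (K n j)" by (simp add: card_PiE finite_K)
  also have "\<dots> \<le> 3 ^ nat \<lceil>sqrt (2 * real n)\<rceil>" by (rule power_increasing[OF card_K]) simp
  finally show ?thesis .
qed

lemma finite_Z: "finite (Z n)" unfolding Z_def by simp

lemma card_Z: "card (Z n) \<le> 3 * n + 1"
proof -
  have "card (Z n) \<le> Suc (card ((\<lambda>(i,v). (replicate n 0)[i:=v]) ` ({..<n} \<times> {..<3::nat})))"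
    unfolding Z_def by (rule card_insert_le_m1) auto
  also have "card ((\<lambda>(i,v). (replicate n 0)[i:=v]) ` ({..<n} \<times> {..<3::nat})) \<le> card ({..<n} \<times> {..<3::nat})"
    by (rule card_image_le) simp
  also have "\<dots> = 3 * n" by (simp add: card_cartesian_product)
  finally show ?thesis by simp
qed

lemma card_W:
  "finite {prefix_seq s n | s. s \<in> Etilde} \<and>
   card {prefix_seq s n | s. s \<in> Etilde} \<le> tri n * 3 ^ nat \<lceil>sqrt (2 * real n)\<rceil> + (3 * n + 1)"
proof -
  let ?U = "(\<Union>j<tri n. wd n j ` PiE (K n j) (\<lambda>_. {..<3::nat}))"
  have fU: "finite ?U" by (simp add: finite_PiE finite_K)
  have "card ?U \<le> (\<Sum>j<tri n. card (wd n j ` PiE (K n j) (\<lambda>_. {..<3::nat})))"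
    by (rule card_UN_le) simp
  also have "\<dots> \<le> (\<Sum>j<tri n. 3 ^ nat \<lceil>sqrt (2 * real n)\<rceil>)"
    by (rule sum_mono) (rule card_Wj)
  finally have cU: "card ?U \<le> tri n * 3 ^ nat \<lceil>sqrt (2 * real n)\<rceil>" by simp
  have f: "finite (?U \<union> Z n)" using fU finite_Z by simp
  have "card {prefix_seq s n | s. s \<in> Etilde} \<le> card (?U \<union> Z n)"
    by (rule card_mono[OF f W_sub])
  also have "\<dots> \<le> card ?U + card (Z n)" by (rule card_Un_le)
  finally show ?thesis using cU card_Z[of n] finite_subset[OF W_sub f] by linarith
qed

lemma edges_sub: "Phi_level_edges Etilde n \<subseteq> (\<lambda>w. (butlast w, w)) ` {prefix_seq s n | s. s \<in> Etilde}"
proof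
  fix e assume "e \<in> Phi_level_edges Etilde n"
  then obtain w j s n' where e: "e = (w, w @ [j])" "w @ [j] = prefix_seq s n'" "s \<in> Etilde"
    "length (w @ [j]) = n"
    unfolding Phi_level_edges_def Phi_edges_def Phi_vertices_def by auto
  have "n' = n" using e(2,4) unfolding prefix_seq_def by (metis length_map diff_zero length_upt)
  show "e \<in> (\<lambda>w. (butlast w, w)) ` {prefix_seq s n | s. s \<in> Etilde}"
  proof (rule image_eqI[of _ _ "w @ [j]"])
    show "e = (butlast (w @ [j]), w @ [j])" using e(1) by simp
    show "w @ [j] \<in> {prefix_seq s n | s. s \<in> Etilde}" using e(2,3) \<open>n' = n\<close> by auto
  qed
qed

lemma card_edges: "card (Phi_level_edges Etilde n) \<le> tri n * 3 ^ nat \<lceil>sqrt (2 * real n)\<rceil> + (3 * n + 1)"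
proof -
  have f: "finite {prefix_seq s n | s. s \<in> Etilde}" using card_W by blast
  have "card (Phi_level_edges Etilde n) \<le> card ((\<lambda>w. (butlast w, w)) ` {prefix_seq s n | s. s \<in> Etilde})"
    by (rule card_mono[OF _ edges_sub]) (use f in simp)
  also have "\<dots> \<le> card {prefix_seq s n | s. s \<in> Etilde}" by (rule card_image_le[OF f])
  finally show ?thesis using card_W[of n] by linarith
qed

lemma sq_le_pow3: "0 \<le> (x::real) \<Longrightarrow> x ^ 2 \<le> 3 powr (2 * x)"
proof -
  assume x: "0 \<le> x"
  have "x ^ 2 \<le> 1 + 2 * x + (2 * x) ^ 2 / 2" using x by (simp add: power2_eq_square)
  also have "\<dots> \<le> exp (2 * x)" using exp_lower_Taylor_quadratic[of "2 * x"] x by simp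
  also have "\<dots> \<le> exp (2 * x * ln 3)"
  proof -
    have "1 \<le> ln (3::real)" using ln_ge_iff[of 3 1] exp_le by (simp add: ln_ge_iff)
    then have "x \<le> x * ln 3" using mult_left_mono[of 1 "ln 3" x] x by simp
    then show ?thesis by simp
  qed
  also have "\<dots> = 3 powr (2 * x)" by (simp add: powr_def mult.commute)
  finally show ?thesis .
qed

theorem mainTheorem3:
  shows "\<exists>C::real. C > 0 \<and>
           (\<forall>n::nat. n \<ge> 1 \<longrightarrow>
              real (card (Phi_level_edges Etilde n)) \<le> 3 powr (C * sqrt (real n)))"
proof (intro exI[of _ 9] conjI allI impI)
  fix n :: nat assume n: "1 \<le> n"
  define x where "x = sqrt (real n)"
  define m where "m = nat \<lceil>sqrt (2 * real n)\<rceil>"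
  have x1: "1 \<le> x" unfolding x_def using n by simp
  have nx: "real n = x ^ 2" unfolding x_def by simp
  have "sqrt (2 * real n) = sqrt 2 * x" unfolding x_def by (simp add: real_sqrt_mult)
  moreover have "sqrt (2::real) \<le> 2"
  proof -
    have "sqrt (2::real) \<le> sqrt (2^2)" by (rule real_sqrt_le_mono) simp
    then show ?thesis by simp
  qed
  ultimately have "sqrt (2 * real n) \<le> 2 * x" using x1 by (metis mult_right_mono order_trans order_refl zero_le_one dual_order.trans)
  then have m3: "real m \<le> 3 * x" unfolding m_def using x1 by linarith
  have t: "real (tri n) \<le> real n ^ 2"
  proof -
    have "2 * tri n \<le> 2 * (n * n)" using tri2[of n] n by simp
    then have "tri n \<le> n * n" by simp
    then have "real (tri n) \<le> real (n * n)" by (simp only: of_nat_le_iff)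
    then show ?thesis by (simp add: power2_eq_square)
  qed
  have p: "(1::real) \<le> 3 ^ m" by simp
  have "real (card (Phi_level_edges Etilde n)) \<le> real (tri n) * 3 ^ m + (3 * real n + 1)"
  proof -
    have "real (card (Phi_level_edges Etilde n)) \<le> real (tri n * 3 ^ m + (3 * n + 1))"
      using card_edges[of n] unfolding m_def by (simp only: of_nat_le_iff)
    then show ?thesis by simp
  qed
  also have "\<dots> \<le> 5 * real n ^ 2 * 3 ^ m"
  proof -
    have "real n \<le> real n ^ 2" using n by (simp add: power2_eq_square)
    moreover have "real n ^ 2 \<le> real n ^ 2 * 3 ^ m" using mult_left_mono[OF p, of "real n ^ 2"] by simp
    ultimately have "3 * real n + 1 \<le> 4 * real n ^ 2 * 3 ^ m" using n by linarith
    moreover have "real (tri n) * 3 ^ m \<le> real n ^ 2 * 3 ^ m" using t by (simp add: mult_right_mono)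
    ultimately show ?thesis by linarith
  qed
  also have "\<dots> \<le> 3 powr (2 * x) * 3 powr (4 * x) * 3 powr (3 * x)"
  proof -
    have a: "5 \<le> 3 powr (2 * x)"
    proof -
      have "(3::real) powr 2 \<le> 3 powr (2 * x)" using x1 by (intro powr_mono) auto
      then show ?thesis by (simp add: powr_numeral)
    qed
    have b: "real n ^ 2 \<le> 3 powr (4 * x)"
    proof -
      have "real n \<le> 3 powr (2 * x)" using sq_le_pow3[of x] x1 nx by simp
      then have "real n ^ 2 \<le> (3 powr (2 * x)) ^ 2" by (intro power_mono) auto
      also have "\<dots> = 3 powr (4 * x)" by (simp add: powr_powr[symmetric] powr_realpow[symmetric] power2_eq_square powr_add[symmetric])
      finally show ?thesis .
    qed
    have c: "(3::real) ^ m \<le> 3 powr (3 * x)"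
    proof -
      have "(3::real) ^ m = 3 powr real m" by (simp add: powr_realpow)
      also have "\<dots> \<le> 3 powr (3 * x)" using m3 by (intro powr_mono) auto
      finally show ?thesis .
    qed
    show ?thesis using a b c by (intro mult_mono) auto
  qed
  also have "\<dots> = 3 powr (9 * sqrt (real n))" unfolding x_def by (simp add: powr_add[symmetric])
  finally show "real (card (Phi_level_edges Etilde n)) \<le> 3 powr (9 * sqrt (real n))" .
qed simp

end
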